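(* Let $n\ge 2$ and let $\mathbf{C}_n=\langle C_n,\wedge,\vee,\to,0,1\rangle$ be a semi-Heyting algebra whose lattice reduct is the chain $C_n=\{a_0<a_1<\cdots<a_{n-1}\}$ with $a_0=0$, $a_{n-1}=1$. Then the set $C_n\setminus\{a_0\}=\{a_1,\dots,a_{n-1}\}$ is closed under $\wedge,\vee,\to$ (in particular $a\to b\neq a_0$ for all $a,b\in C_n\setminus\{a_0\}$), and $\mathbf{S}_{n-1}=\langle C_n\setminus\{a_0\},\wedge,\vee,\to,a_1,1\rangle$ (with the restricted operations, bottom $a_1$ and top $1$) is a semi-Heyting algebra.
   Context: A semi-Heyting algebra is an algebra $\langle L,\vee,\wedge,\to,0,1\rangle$ such that: (SH1) $\langle L,\vee,\wedge,0,1\rangle$ is a bounded lattice with least element $0$ and greatest element $1$; (SH2) $x\wedge(x\to y)=x\wedge y$; (SH3) $x\wedge(y\to z)=x\wedge[(x\wedge y)\to(x\wedge z)]$; (SH4) $x\to x=1$, for all $x,y,z\in L$. *)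

theory Defs
  imports Main
begin

definition bounded_lattice_on ::
  "'a set \<Rightarrow> ('a \<Rightarrow> 'a \<Rightarrow> 'a) \<Rightarrow> ('a \<Rightarrow> 'a \<Rightarrow> 'a) \<Rightarrow> 'a \<Rightarrow> 'a \<Rightarrow> bool" where
  "bounded_lattice_on L jn mt z u \<longleftrightarrow>
     z \<in> L \<and> u \<in> L \<and>
     (\<forall>x\<in>L. \<forall>y\<in>L. jn x y \<in> L \<and> mt x y \<in> L) \<and>
     (\<forall>x\<in>L. \<forall>y\<in>L. jn x y = jn y x \<and> mt x y = mt y x) \<and>
     (\<forall>x\<in>L. \<forall>y\<in>L. \<forall>w\<in>L. jn x (jn y w) = jn (jn x y) w \<and> mt x (mt y w) = mt (mt x y) w) \<and>
     (\<forall>x\<in>L. \<forall>y\<in>L. jn x (mt x y) = x \<and> mt x (jn x y) = x) \<and>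
     (\<forall>x\<in>L. jn z x = x \<and> mt u x = x)"

definition semi_heyting_on ::
  "'a set \<Rightarrow> ('a \<Rightarrow> 'a \<Rightarrow> 'a) \<Rightarrow> ('a \<Rightarrow> 'a \<Rightarrow> 'a) \<Rightarrow> ('a \<Rightarrow> 'a \<Rightarrow> 'a) \<Rightarrow> 'a \<Rightarrow> 'a \<Rightarrow> bool" where
  "semi_heyting_on L jn mt imp z u \<longleftrightarrow>
     bounded_lattice_on L jn mt z u \<and>
     (\<forall>x\<in>L. \<forall>y\<in>L. imp x y \<in> L) \<and>
     (\<forall>x\<in>L. \<forall>y\<in>L. mt x (imp x y) = mt x y) \<and>
     (\<forall>x\<in>L. \<forall>y\<in>L. \<forall>w\<in>L. mt x (imp y w) = mt x (imp (mt x y) (mt x w))) \<and>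
     (\<forall>x\<in>L. imp x x = u)"

end

theory Submission
  imports Defs
begin

theorem mainTheorem1:
  fixes C :: "'a set" and jn mt imp :: "'a \<Rightarrow> 'a \<Rightarrow> 'a" and z u :: 'a
    and a :: "nat \<Rightarrow> 'a" and n :: nat
  assumes n2: "n \<ge> 2"
    and SH: "semi_heyting_on C jn mt imp z u"
    and carrier: "C = a ` {..<n}"
    and chain: "\<And>i j. i < j \<Longrightarrow> j < n \<Longrightarrow> mt (a i) (a j) = a i \<and> a i \<noteq> a j"
    and a0: "a 0 = z"
    and an: "a (n - 1) = u"
  shows "(\<forall>x\<in>C - {a 0}. \<forall>y\<in>C - {a 0}.
            mt x y \<in> C - {a 0} \<and> jn x y \<in> C - {a 0} \<and> imp x y \<in> C - {a 0})
         \<and> semi_heyting_on (C - {a 0}) jn mt imp (a 1) u"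
proof -
  have BL: "bounded_lattice_on C jn mt z u" using SH unfolding semi_heyting_on_def by blast
  note bl = BL[unfolded bounded_lattice_on_def]
  have zC: "z \<in> C" and uC: "u \<in> C" using bl by auto
  have clo: "\<And>x y. x \<in> C \<Longrightarrow> y \<in> C \<Longrightarrow> jn x y \<in> C \<and> mt x y \<in> C" using bl by blast
  have com: "\<And>x y. x \<in> C \<Longrightarrow> y \<in> C \<Longrightarrow> jn x y = jn y x \<and> mt x y = mt y x" using bl by blast
  have ab: "\<And>x y. x \<in> C \<Longrightarrow> y \<in> C \<Longrightarrow> jn x (mt x y) = x \<and> mt x (jn x y) = x" using bl by blast
  have zj: "\<And>x. x \<in> C \<Longrightarrow> jn z x = x \<and> mt u x = x" using bl by blast
  have impC: "\<And>x y. x \<in> C \<Longrightarrow> y \<in> C \<Longrightarrow> imp x y \<in> C" using SH unfolding semi_heyting_on_def by blast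
  have sh2: "\<And>x y. x \<in> C \<Longrightarrow> y \<in> C \<Longrightarrow> mt x (imp x y) = mt x y" using SH unfolding semi_heyting_on_def by blast
  have aC: "\<And>i. i < n \<Longrightarrow> a i \<in> C" using carrier by auto
  have mtid: "\<And>x. x \<in> C \<Longrightarrow> mt x x = x"
  proof -
    fix x assume x: "x \<in> C"
    have "mt x x = mt x (jn x (mt x x))" by (subst ab[OF x x, THEN conjunct1]) (rule refl)
    also have "\<dots> = x" using ab[OF x clo[OF x x, THEN conjunct2], THEN conjunct2] .
    finally show "mt x x = x" .
  qed
  have mtz: "\<And>x. x \<in> C \<Longrightarrow> mt x z = z"
  proof -
    fix x assume x: "x \<in> C"
    have "mt z x = mt z (jn z x)" using zj[OF x] by simp
    also have "\<dots> = z" using ab[OF zC x] by simp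
    finally show "mt x z = z" using com[OF x zC] by simp
  qed
  have mtmin: "\<And>i j. i < n \<Longrightarrow> j < n \<Longrightarrow> mt (a i) (a j) = a (min i j)"
  proof -
    fix i j assume i: "i < n" and j: "j < n"
    show "mt (a i) (a j) = a (min i j)"
    proof (cases i j rule: linorder_cases)
      case less then show ?thesis using chain j by (simp add: min_def)
    next
      case equal then show ?thesis using mtid aC i by simp
    next
      case greater
      have "mt (a i) (a j) = mt (a j) (a i)" using com aC i j by blast
      also have "\<dots> = a j" using chain greater i by blast
      finally show ?thesis using greater by (simp add: min_def)
    qed
  qed
  have jnmax: "\<And>i j. i < n \<Longrightarrow> j < n \<Longrightarrow> jn (a i) (a j) = a (max i j)"
  proof -
    fix i j assume i: "i < n" and j: "j < n"
    show "jn (a i) (a j) = a (max i j)"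
    proof (cases "i \<le> j")
      case True
      have "jn (a i) (a j) = jn (a j) (mt (a j) (a i))"
        using mtmin[OF j i] True com[OF aC[OF i] aC[OF j]] by (simp add: min_def)
      also have "\<dots> = a j" using ab aC j i by simp
      finally show ?thesis using True by (simp add: max_def)
    next
      case False
      have "jn (a i) (a j) = jn (a i) (mt (a i) (a j))"
        using mtmin[OF i j] False by (simp add: min_def)
      also have "\<dots> = a i" using ab aC j i by simp
      finally show ?thesis using False by (simp add: max_def)
    qed
  qed
  have nz: "\<And>i. 0 < i \<Longrightarrow> i < n \<Longrightarrow> a i \<noteq> a 0" using chain by metis
  have D: "C - {a 0} = a ` {1..<n}"
  proof
    show "C - {a 0} \<subseteq> a ` {1..<n}"
    proof
      fix x assume x: "x \<in> C - {a 0}"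
      then obtain i where i: "i < n" "x = a i" using carrier by auto
      then have "i \<noteq> 0" using x by (cases i) auto
      then show "x \<in> a ` {1..<n}" using i by auto
    qed
    show "a ` {1..<n} \<subseteq> C - {a 0}" using carrier nz by auto
  qed
  have memD: "\<And>x. x \<in> C - {a 0} \<Longrightarrow> \<exists>i. 0 < i \<and> i < n \<and> x = a i"
    using D by (auto simp: Suc_le_eq)
  have mtD: "\<And>x y. x \<in> C - {a 0} \<Longrightarrow> y \<in> C - {a 0} \<Longrightarrow> mt x y \<in> C - {a 0}"
  proof -
    fix x y assume "x \<in> C - {a 0}" "y \<in> C - {a 0}"
    then obtain i j where "0<i" "i<n" "x = a i" "0<j" "j<n" "y = a j" using memD by metis
    then show "mt x y \<in> C - {a 0}" using mtmin D by auto
  qed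
  have jnD: "\<And>x y. x \<in> C - {a 0} \<Longrightarrow> y \<in> C - {a 0} \<Longrightarrow> jn x y \<in> C - {a 0}"
  proof -
    fix x y assume "x \<in> C - {a 0}" "y \<in> C - {a 0}"
    then obtain i j where "0<i" "i<n" "x = a i" "0<j" "j<n" "y = a j" using memD by metis
    then show "jn x y \<in> C - {a 0}" using jnmax D by auto
  qed
  have impD: "\<And>x y. x \<in> C - {a 0} \<Longrightarrow> y \<in> C - {a 0} \<Longrightarrow> imp x y \<in> C - {a 0}"
  proof -
    fix x y assume x: "x \<in> C - {a 0}" and y: "y \<in> C - {a 0}"
    have "imp x y \<noteq> a 0"
    proof
      assume "imp x y = a 0"
      then have "mt x y = mt x z" using sh2 x y a0 by auto
      then have "mt x y = a 0" using mtz x a0 by auto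
      then show False using mtD[OF x y] by simp
    qed
    then show "imp x y \<in> C - {a 0}" using impC x y by auto
  qed
  have a1: "a 1 \<in> C - {a 0}" using D n2 by auto
  have uD: "u \<in> C - {a 0}" using D n2 an by force
  have bot: "\<And>x. x \<in> C - {a 0} \<Longrightarrow> jn (a 1) x = x"
  proof -
    fix x assume "x \<in> C - {a 0}"
    then obtain i where "0<i" "i<n" "x = a i" using memD by metis
    then show "jn (a 1) x = x" using jnmax[of 1 i] by (simp add: max_def)
  qed
  have "bounded_lattice_on (C - {a 0}) jn mt (a 1) u"
    unfolding bounded_lattice_on_def using a1 uD mtD jnD bot bl by blast
  then have "semi_heyting_on (C - {a 0}) jn mt imp (a 1) u"
    using SH impD unfolding semi_heyting_on_def by blast
  then show ?thesis using mtD jnD impD by blast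
qed

end
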